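(* Let $\alpha=(x,u')$ and $\beta=(y,v')$ be points of $\mathcal{S}$ with $x\neq y$, $u'\neq v'$, and either ($u'\in y'^{\perp}$ and $v'\notin x'^{\perp}$) or ($u'\notin y'^{\perp}$ and $v'\in x'^{\perp}$) (perps in $S'$). Then $d(\alpha,\beta)=3$, where $d$ is the distance in the collinearity graph of $\mathcal{S}$.
   Context: Let $S=(P,L)$ and $S'=(P',L')$ be generalized quadrangles of order $(2,2)$ (every line has 3 points, every point lies on 3 lines, and for each point $x$ and line $l\not\ni x$ exactly one point of $l$ is collinear with $x$), with an isomorphism $x\mapsto x'$ from $S$ to $S'$. In a point-line geometry, $x^{\perp}$ is $x$ together with all points collinear with $x$, and $A^{\perp}=\bigcap_{a\in A}a^{\perp}$. A triad is a set of three pairwise non-collinear points, complete if $|T^{\perp}|=3$. The geometry $\mathcal{S}=(\mathcal{P},\mathcal{L})$ has point set $\mathcal{P}=\{(x,y')\in P\times P':y'\in x'^{\perp}\}$ and lines all $3$-subsets $\{(x,u'),(y,v'),(z,w')\}$ of $\mathcal{P}$ where $T=\{x,y,z\}$ (three distinct points) is a line or a complete triad of $S$ and $\{u',v',w'\}=T'^{\perp}$ in $S'$ with $u',v',w'$ distinct. *)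

theory Defs
  imports Main
begin

definition perp :: "'p set \<Rightarrow> 'p set set \<Rightarrow> 'p \<Rightarrow> 'p set" where
  "perp P L x = {y \<in> P. y = x \<or> (\<exists>l\<in>L. x \<in> l \<and> y \<in> l)}"

definition setperp :: "'p set \<Rightarrow> 'p set set \<Rightarrow> 'p set \<Rightarrow> 'p set" where
  "setperp P L A = {y \<in> P. \<forall>a\<in>A. y \<in> perp P L a}"

definition collinear :: "'p set set \<Rightarrow> 'p \<Rightarrow> 'p \<Rightarrow> bool" where
  "collinear L x y \<longleftrightarrow> (\<exists>l\<in>L. x \<in> l \<and> y \<in> l)"

definition gq22 :: "'p set \<Rightarrow> 'p set set \<Rightarrow> bool" where
  "gq22 P L \<longleftrightarrow>
     (\<forall>l\<in>L. l \<subseteq> P \<and> card l = 3) \<and>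
     (\<forall>x\<in>P. card {l\<in>L. x \<in> l} = 3) \<and>
     (\<forall>x\<in>P. \<forall>l\<in>L. x \<notin> l \<longrightarrow> (\<exists>!y. y \<in> l \<and> collinear L x y))"

definition geom_iso :: "('p \<Rightarrow> 'q) \<Rightarrow> 'p set \<Rightarrow> 'p set set \<Rightarrow> 'q set \<Rightarrow> 'q set set \<Rightarrow> bool" where
  "geom_iso f P L P' L' \<longleftrightarrow> bij_betw f P P' \<and> (\<lambda>l. f ` l) ` L = L'"

definition triad :: "'p set \<Rightarrow> 'p set set \<Rightarrow> 'p set \<Rightarrow> bool" where
  "triad P L T \<longleftrightarrow> T \<subseteq> P \<and> card T = 3 \<and>
     (\<forall>a\<in>T. \<forall>b\<in>T. a \<noteq> b \<longrightarrow> \<not> collinear L a b)"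

definition complete_triad :: "'p set \<Rightarrow> 'p set set \<Rightarrow> 'p set \<Rightarrow> bool" where
  "complete_triad P L T \<longleftrightarrow> triad P L T \<and> card (setperp P L T) = 3"

definition bigPoints :: "'p set \<Rightarrow> 'p set set \<Rightarrow> 'q set \<Rightarrow> 'q set set \<Rightarrow> ('p \<Rightarrow> 'q) \<Rightarrow> ('p \<times> 'q) set" where
  "bigPoints P L P' L' f = {(x, y). x \<in> P \<and> y \<in> perp P' L' (f x)}"

definition bigLines :: "'p set \<Rightarrow> 'p set set \<Rightarrow> 'q set \<Rightarrow> 'q set set \<Rightarrow> ('p \<Rightarrow> 'q) \<Rightarrow> ('p \<times> 'q) set set" where
  "bigLines P L P' L' f =
    {{(x, u), (y, v), (z, w)} | x y z u v w.
        distinct [x, y, z] \<and>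
        ({x, y, z} \<in> L \<or> complete_triad P L {x, y, z}) \<and>
        distinct [u, v, w] \<and>
        {u, v, w} = setperp P' L' (f ` {x, y, z}) \<and>
        {(x, u), (y, v), (z, w)} \<subseteq> bigPoints P L P' L' f}"

definition bigAdj :: "'p set \<Rightarrow> 'p set set \<Rightarrow> 'q set \<Rightarrow> 'q set set \<Rightarrow> ('p \<Rightarrow> 'q) \<Rightarrow> (('p \<times> 'q) \<times> ('p \<times> 'q)) set" where
  "bigAdj P L P' L' f = {(a, b). a \<noteq> b \<and> (\<exists>l\<in>bigLines P L P' L' f. a \<in> l \<and> b \<in> l)}"

definition graph_dist_is :: "('a \<times> 'a) set \<Rightarrow> 'a \<Rightarrow> 'a \<Rightarrow> nat \<Rightarrow> bool" where
  "graph_dist_is E a b n \<longleftrightarrow> (a, b) \<in> E ^^ n \<and> (\<forall>m<n. (a, b) \<notin> E ^^ m)"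

end

theory Submission
  imports Defs
begin


lemma card3_E:
  assumes "card A = 3"
  obtains a b c where "A = {a,b,c}" "a \<noteq> b" "b \<noteq> c" "a \<noteq> c"
  using assms by (auto simp: card_Suc_eq numeral_3_eq_3)

lemma card3_third:
  assumes "card A = 3" "a \<in> A" "b \<in> A" "a \<noteq> b"
  obtains c where "A = {a,b,c}" "c \<noteq> a" "c \<noteq> b"
proof -
  have fin: "finite A" using assms(1) by (metis card.infinite zero_neq_numeral)
  have "card (A - {a,b}) = 1" using assms fin by (simp add: card_Diff_subset)
  then obtain c where c: "A - {a,b} = {c}" by (metis card_1_singletonE)
  have "A = {a,b,c}" using c assms(2,3) by blast
  moreover have "c \<noteq> a" "c \<noteq> b" using c by blast+
  ultimately show ?thesis using that by blast
qed

lemma card3_other: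
  assumes "card A = 3" "a \<in> A"
  obtains c where "c \<in> A" "c \<noteq> a"
proof -
  obtain p q r where A: "A = {p,q,r}" "p \<noteq> q" "q \<noteq> r" "p \<noteq> r"
    using card3_E[OF assms(1)] by blast
  show ?thesis
  proof (cases "p = a")
    case True then show ?thesis using A that by blast
  next
    case False then show ?thesis using A that by blast
  qed
qed

lemma card3_other2:
  assumes "card A = 3"
  obtains c where "c \<in> A" "c \<noteq> a" "c \<noteq> b"
proof -
  obtain p q r where A: "A = {p,q,r}" "p \<noteq> q" "q \<noteq> r" "p \<noteq> r"
    using card3_E[OF assms(1)] by blast
  show ?thesis
  proof (cases "p \<noteq> a \<and> p \<noteq> b")
    case True then show ?thesis using A that by blast
  next
    case F1: False
    show ?thesis
    proof (cases "q \<noteq> a \<and> q \<noteq> b")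
      case True then show ?thesis using A that by blast
    next
      case False then show ?thesis using A that F1 by blast
    qed
  qed
qed

lemma collinear_sym: "collinear L a b \<Longrightarrow> collinear L b a"
  unfolding collinear_def by blast

lemma perp_iff: "y \<in> perp P L x \<longleftrightarrow> y \<in> P \<and> (y = x \<or> collinear L x y)"
  unfolding perp_def collinear_def by blast

lemma setperp_iff: "y \<in> setperp P L A \<longleftrightarrow> y \<in> P \<and> (\<forall>a\<in>A. y \<in> perp P L a)"
  unfolding setperp_def by blast

lemma setperp2: "y \<in> setperp P L {a,b} \<longleftrightarrow> y \<in> perp P L a \<and> y \<in> perp P L b"
  unfolding setperp_def perp_def by blast

lemma perp_sym: "x \<in> P \<Longrightarrow> y \<in> perp P L x \<Longrightarrow> x \<in> perp P L y"
  unfolding perp_iff collinear_def by blast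

locale gqloc =
  fixes P :: "'a set" and L :: "'a set set"
  assumes gq: "gq22 P L"
begin

lemma line_sub: "l \<in> L \<Longrightarrow> l \<subseteq> P" and line_card: "l \<in> L \<Longrightarrow> card l = 3"
  using gq unfolding gq22_def by auto

lemma line_fin: "l \<in> L \<Longrightarrow> finite l"
  using line_card by (metis card.infinite zero_neq_numeral)

lemma lines_card: "x \<in> P \<Longrightarrow> card {l\<in>L. x \<in> l} = 3"
  using gq unfolding gq22_def by auto

lemma gq_ex1: "x \<in> P \<Longrightarrow> l \<in> L \<Longrightarrow> x \<notin> l \<Longrightarrow> \<exists>!y. y \<in> l \<and> collinear L x y"
  using gq unfolding gq22_def by (elim conjE) (drule bspec, assumption, drule bspec, assumption, simp)

lemma gq_ex: "x \<in> P \<Longrightarrow> l \<in> L \<Longrightarrow> x \<notin> l \<Longrightarrow> \<exists>y\<in>l. collinear L x y"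
  using gq_ex1 by (metis (no_types, lifting))

lemma gq_uniq: "x \<in> P \<Longrightarrow> l \<in> L \<Longrightarrow> x \<notin> l \<Longrightarrow> y1 \<in> l \<Longrightarrow> y2 \<in> l
   \<Longrightarrow> collinear L x y1 \<Longrightarrow> collinear L x y2 \<Longrightarrow> y1 = y2"
  using gq_ex1 by (metis (no_types, lifting))

lemma two_lines:
  assumes "l1 \<in> L" "l2 \<in> L" "a \<noteq> b" "a \<in> l1" "b \<in> l1" "a \<in> l2" "b \<in> l2"
  shows "l1 = l2"
proof (rule ccontr)
  assume ne: "l1 \<noteq> l2"
  have "\<not> l2 \<subseteq> l1"
  proof
    assume "l2 \<subseteq> l1"
    moreover have "card l2 = card l1" using line_card[OF assms(1)] line_card[OF assms(2)] by simp
    ultimately have "l2 = l1" using line_fin[OF assms(1)] card_subset_eq by blast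
    then show False using ne by simp
  qed
  then obtain z where z: "z \<in> l2" "z \<notin> l1" by blast
  have zP: "z \<in> P" using z line_sub[OF assms(2)] by blast
  have "collinear L z a" "collinear L z b" unfolding collinear_def using assms z by blast+
  then have "a = b" using gq_uniq[OF zP assms(1) z(2) assms(4) assms(5)] by blast
  then show False using assms(3) by blast
qed

lemma on_line_perp:
  assumes "l \<in> L" "a \<noteq> b" "a \<in> l" "b \<in> l" "c \<in> perp P L a" "c \<in> perp P L b"
  shows "c \<in> l"
proof (rule ccontr)
  assume cn: "c \<notin> l"
  have cP: "c \<in> P" using assms(5) perp_iff by metis
  have "c \<noteq> a" "c \<noteq> b" using cn assms by auto
  then have "collinear L c a" "collinear L c b" using assms(5,6) perp_iff collinear_sym by metis+
  then show False using gq_uniq[OF cP assms(1) cn assms(3,4)] assms(2) by blast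
qed

lemma setperp_line: "l \<in> L \<Longrightarrow> setperp P L l = l"
proof -
  assume l: "l \<in> L"
  obtain a b c where abc: "l = {a,b,c}" "a \<noteq> b" "b \<noteq> c" "a \<noteq> c"
    using card3_E[OF line_card[OF l]] by blast
  show ?thesis
  proof
    show "setperp P L l \<subseteq> l"
    proof
      fix y assume "y \<in> setperp P L l"
      then have "y \<in> perp P L a" "y \<in> perp P L b" unfolding abc(1) setperp_iff by simp_all
      then show "y \<in> l" using on_line_perp[OF l abc(2)] abc(1) by blast
    qed
    show "l \<subseteq> setperp P L l"
    proof
      fix y assume y: "y \<in> l"
      have "\<forall>a\<in>l. y \<in> perp P L a"
      proof
        fix a assume "a \<in> l"
        then have "collinear L a y" unfolding collinear_def using l y by blast
        then show "y \<in> perp P L a" unfolding perp_iff using y line_sub[OF l] by blast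
      qed
      then show "y \<in> setperp P L l" unfolding setperp_iff using y line_sub[OF l] by blast
    qed
  qed
qed

lemma noncol_pair:
  assumes "u \<in> P" "w \<in> P" "u \<noteq> w" "\<not> collinear L u w" "Y \<in> setperp P L {u,w}" "Z \<in> setperp P L {u,w}" "Y \<noteq> Z"
  shows "\<not> collinear L Y Z"
proof
  assume "collinear L Y Z"
  then obtain l where l: "l \<in> L" "Y \<in> l" "Z \<in> l" unfolding collinear_def by blast
  have uP: "u \<in> perp P L Y" "u \<in> perp P L Z" "w \<in> perp P L Y" "w \<in> perp P L Z"
  proof -
    have "Y \<in> perp P L u" "Y \<in> perp P L w" "Z \<in> perp P L u" "Z \<in> perp P L w"
      using assms(5,6) unfolding setperp2 by simp_all
    then show "u \<in> perp P L Y" "u \<in> perp P L Z" "w \<in> perp P L Y" "w \<in> perp P L Z"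
      using perp_sym assms(1,2) by metis+
  qed
  have "u \<in> l" "w \<in> l" using on_line_perp[OF l(1) assms(7) l(2,3)] uP by blast+
  then show False using assms(4) l(1) unfolding collinear_def by blast
qed

end


lemma perp_col: "y \<in> perp P L x \<Longrightarrow> y \<noteq> x \<Longrightarrow> collinear L x y"
  unfolding perp_iff by blast

lemma col_perp: "collinear L x y \<Longrightarrow> y \<in> P \<Longrightarrow> y \<in> perp P L x"
  unfolding perp_iff by blast

lemma line_col: "l \<in> L \<Longrightarrow> x \<in> l \<Longrightarrow> y \<in> l \<Longrightarrow> collinear L x y"
  unfolding collinear_def by blast

lemma perp_P: "y \<in> perp P L x \<Longrightarrow> y \<in> P"
  unfolding perp_iff by blast

lemma setperp_P: "y \<in> setperp P L A \<Longrightarrow> y \<in> P"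
  unfolding setperp_iff by blast

context gqloc
begin

lemma perp2_card:
  assumes aP: "a \<in> P" and bP: "b \<in> P" and ab: "a \<noteq> b" and nc: "\<not> collinear L a b"
  shows "card (setperp P L {a,b}) = 3"
proof -
  define Ls where "Ls = {l\<in>L. a \<in> l}"
  define g where "g l = (THE y. y \<in> l \<and> collinear L b y)" for l
  have bnot: "b \<notin> l" if "l \<in> Ls" for l
    using that nc unfolding Ls_def collinear_def by blast
  have gprop: "g l \<in> l \<and> collinear L b (g l)" if "l \<in> Ls" for l
  proof -
    have "\<exists>!y. y \<in> l \<and> collinear L b y"
      using gq_ex1[OF bP _ bnot[OF that]] that unfolding Ls_def by blast
    then show ?thesis unfolding g_def by (rule theI')
  qed
  have "bij_betw g Ls (setperp P L {a,b})"
    unfolding bij_betw_def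
  proof (intro conjI)
    show "inj_on g Ls"
    proof (rule inj_onI)
      fix l1 l2 assume l1: "l1 \<in> Ls" and l2: "l2 \<in> Ls" and e: "g l1 = g l2"
      have ya: "g l1 \<noteq> a"
      proof
        assume "g l1 = a"
        then have "collinear L b a" using gprop[OF l1] by simp
        then show False using nc collinear_sym by metis
      qed
      show "l1 = l2"
        using two_lines[of l1 l2 a "g l1"] ya gprop[OF l1] gprop[OF l2] e l1 l2
        unfolding Ls_def by auto
    qed
    show "g ` Ls = setperp P L {a, b}"
    proof
      show "g ` Ls \<subseteq> setperp P L {a, b}"
      proof
        fix y assume "y \<in> g ` Ls"
        then obtain l where l: "l \<in> Ls" "y = g l" by blast
        have lL: "l \<in> L" "a \<in> l" using l(1) unfolding Ls_def by simp_all
        have gl: "g l \<in> l" "collinear L b (g l)" using gprop[OF l(1)] by simp_all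
        have yP: "g l \<in> P" using subsetD[OF line_sub[OF lL(1)] gl(1)] .
        have "g l \<in> perp P L a" using col_perp[OF line_col[OF lL(1) lL(2) gl(1)] yP] .
        moreover have "g l \<in> perp P L b" using col_perp[OF gl(2) yP] .
        ultimately have "g l \<in> setperp P L {a, b}" unfolding setperp2 by blast
        then show "y \<in> setperp P L {a, b}" using l(2) by simp
      qed
      show "setperp P L {a, b} \<subseteq> g ` Ls"
      proof
        fix y assume y: "y \<in> setperp P L {a, b}"
        then have ya: "y \<in> perp P L a" and yb: "y \<in> perp P L b" unfolding setperp2 by auto
        have "y \<noteq> a"
        proof
          assume "y = a"
          then have "collinear L b a" using yb ab perp_col by metis
          then show False using nc collinear_sym by metis
        qed
        then have "collinear L a y" using ya perp_col by metis
        then obtain l where l: "l \<in> L" "a \<in> l" "y \<in> l" unfolding collinear_def by blast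
        have lLs: "l \<in> Ls" unfolding Ls_def using l by blast
        have "y \<noteq> b"
        proof
          assume "y = b" then show False using l bnot[OF lLs] by simp
        qed
        then have cby: "collinear L b y" using yb perp_col by metis
        have "g l = y"
          using gq_uniq[OF bP l(1) bnot[OF lLs] _ l(3) _ cby] gprop[OF lLs] by blast
        then show "y \<in> g ` Ls" using lLs by blast
      qed
    qed
  qed
  then have "card (setperp P L {a,b}) = card Ls" by (metis bij_betw_same_card)
  also have "\<dots> = 3" unfolding Ls_def using lines_card[OF aP] .
  finally show ?thesis .
qed

lemma not_col_two:
  assumes "x \<in> P" "l \<in> L" "x \<notin> l" "y1 \<in> l" "y2 \<in> l" "y1 \<noteq> y2"
    "collinear L x y1" "collinear L x y2"
  shows False
  using gq_uniq[OF assms(1-5) assms(7,8)] assms(6) by blast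

lemma regular:
  assumes aP: "a \<in> P" and bP: "b \<in> P" and ab: "a \<noteq> b" and nc: "\<not> collinear L a b"
  shows "card (setperp P L (setperp P L {a,b})) = 3"
proof -
  define D where "D = setperp P L {a,b}"
  have cD: "card D = 3" unfolding D_def using perp2_card[OF assms] .
  obtain p q r where pqr: "D = {p,q,r}" "p \<noteq> q" "q \<noteq> r" "p \<noteq> r"
    using card3_E[OF cD] by blast
  have pD: "p \<in> D" "q \<in> D" "r \<in> D" using pqr by auto
  have PP: "p \<in> P" "q \<in> P" "r \<in> P" using pD setperp_P unfolding D_def by metis+
  have ncpq: "\<not> collinear L p q" using noncol_pair[OF aP bP ab nc, of p q] pD pqr unfolding D_def by blast
  have ncpr: "\<not> collinear L p r" using noncol_pair[OF aP bP ab nc, of p r] pD pqr unfolding D_def by blast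
  have ncqr: "\<not> collinear L q r" using noncol_pair[OF aP bP ab nc, of q r] pD pqr unfolding D_def by blast
  have perpD: "d \<in> perp P L a" "d \<in> perp P L b" if "d \<in> D" for d
    using that unfolding D_def setperp2 by auto
  define E where "E = setperp P L {p,q}"
  have cE: "card E = 3" unfolding E_def using perp2_card[OF PP(1,2) pqr(2) ncpq] .
  have aE: "a \<in> E" unfolding E_def setperp2 using perp_sym[OF aP] perpD pD by blast
  have bE: "b \<in> E" unfolding E_def setperp2 using perp_sym[OF bP] perpD pD by blast
  obtain c where c: "E = {a,b,c}" "c \<noteq> a" "c \<noteq> b" using card3_third[OF cE aE bE ab] by blast
  have cE': "c \<in> E" using c by blast
  have cP: "c \<in> P" using cE' setperp_P unfolding E_def by metis
  have cp: "c \<in> perp P L p" and cq: "c \<in> perp P L q" using cE' unfolding E_def setperp2 by auto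
  have anb: "a \<notin> perp P L b"
    using ab nc collinear_sym perp_col by metis
  have bna: "b \<notin> perp P L a"
    using ab nc perp_col by metis
  have claim: "c \<in> perp P L r"
  proof (rule ccontr)
    assume cr: "c \<notin> perp P L r"
    have "c \<noteq> r" using cr cP unfolding perp_iff by blast
    have ncrc: "\<not> collinear L r c" using cr cP col_perp by metis
    have ncac: "\<not> collinear L a c"
      using noncol_pair[OF PP(1,2) pqr(2) ncpq, of a c] aE cE' c(2) unfolding E_def by metis
    have ncbc: "\<not> collinear L b c"
      using noncol_pair[OF PP(1,2) pqr(2) ncpq, of b c] bE cE' c(3) unfolding E_def by metis
    have ra: "r \<noteq> a" using perpD[OF pD(3)] anb by metis
    have rb: "r \<noteq> b" using perpD[OF pD(3)] bna by metis
    obtain la where la: "la \<in> L" "a \<in> la" "r \<in> la"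
      using perp_col[OF perpD(1)[OF pD(3)] ra] unfolding collinear_def by blast
    obtain lb where lb: "lb \<in> L" "b \<in> lb" "r \<in> lb"
      using perp_col[OF perpD(2)[OF pD(3)] rb] unfolding collinear_def by blast
    obtain a' where a': "la = {r,a,a'}" "a' \<noteq> r" "a' \<noteq> a"
      using card3_third[OF line_card[OF la(1)] la(3) la(2) ra] by blast
    obtain b' where b': "lb = {r,b,b'}" "b' \<noteq> r" "b' \<noteq> b"
      using card3_third[OF line_card[OF lb(1)] lb(3) lb(2) rb] by blast
    have lab: "la \<noteq> lb" using la lb nc unfolding collinear_def by blast
    have cnla: "c \<notin> la"
    proof
      assume "c \<in> la"
      then have "c = a'" using a'(1) \<open>c \<noteq> r\<close> c(2) by blast
      then show False using ncrc line_col[OF la(1) la(3)] a'(1) by blast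
    qed
    obtain y1 where y1: "y1 \<in> la" "collinear L c y1" using gq_ex[OF cP la(1) cnla] by blast
    have "y1 \<noteq> r" using y1 ncrc collinear_sym by metis
    moreover have "y1 \<noteq> a" using y1 ncac collinear_sym by metis
    ultimately have ca': "collinear L c a'" using y1 a'(1) by blast
    have cnlb: "c \<notin> lb"
    proof
      assume "c \<in> lb"
      then have "c = b'" using b'(1) \<open>c \<noteq> r\<close> c(3) by blast
      then show False using ncrc line_col[OF lb(1) lb(3)] b'(1) by blast
    qed
    obtain y2 where y2: "y2 \<in> lb" "collinear L c y2" using gq_ex[OF cP lb(1) cnlb] by blast
    have "y2 \<noteq> r" using y2 ncrc collinear_sym by metis
    moreover have "y2 \<noteq> b" using y2 ncbc collinear_sym by metis
    ultimately have cb': "collinear L c b'" using y2 b'(1) by blast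
    have a'b': "a' \<noteq> b'"
    proof
      assume e: "a' = b'"
      have i1: "a' \<in> la" using a'(1) by blast
      have i2: "a' \<in> lb" using b'(1) e by blast
      have "la = lb" using two_lines[OF la(1) lb(1) a'(2)[symmetric] la(3) i1 lb(3) i2] .
      then show False using lab by simp
    qed
    have b'nla: "b' \<notin> la"
    proof
      assume "b' \<in> la"
      moreover have "b' \<in> lb" using b'(1) by blast
      ultimately have "la = lb" using two_lines[OF la(1) lb(1) b'(2)[symmetric] la(3) _ lb(3)] by blast
      then show False using lab by simp
    qed
    have pnl: "p \<notin> la" "p \<notin> lb" "q \<notin> la" "q \<notin> lb"
      using line_col[OF la(1) la(3)] line_col[OF lb(1) lb(3)] ncpr ncqr pqr collinear_sym by metis+
    have pa: "p \<noteq> a" "q \<noteq> a" using perpD pD anb by metis+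
    have pb: "p \<noteq> b" "q \<noteq> b" using perpD pD bna by metis+
    have colpa: "collinear L p a" "collinear L q a"
      using perpD(1)[OF pD(1)] perpD(1)[OF pD(2)] pa perp_col collinear_sym by metis+
    have colpb: "collinear L p b" "collinear L q b"
      using perpD(2)[OF pD(1)] perpD(2)[OF pD(2)] pb perp_col collinear_sym by metis+
    have cnp: "c \<noteq> p"
    proof
      assume "c = p" then have "p \<in> perp P L q" using cq by simp
      then show False using pqr(2) perp_col ncpq collinear_sym by metis
    qed
    have cnq: "c \<noteq> q"
    proof
      assume "c = q" then have "q \<in> perp P L p" using cp by simp
      then show False using pqr(2) perp_col ncpq by metis
    qed
    obtain lp where lp: "lp \<in> L" "c \<in> lp" "p \<in> lp"
      using perp_col[OF cp cnp] unfolding collinear_def by blast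
    obtain lq where lq: "lq \<in> L" "c \<in> lq" "q \<in> lq"
      using perp_col[OF cq cnq] unfolding collinear_def by blast
    obtain k1 where k1: "k1 \<in> L" "c \<in> k1" "a' \<in> k1" using ca' unfolding collinear_def by blast
    obtain k2 where k2: "k2 \<in> L" "c \<in> k2" "b' \<in> k2" using cb' unfolding collinear_def by blast
    have "lp \<noteq> lq" using lp lq ncpq line_col by metis
    moreover have "k1 \<noteq> lp"
    proof
      assume "k1 = lp"
      then have "collinear L p a'" using line_col[OF lp(1) lp(3)] k1 by simp
      then show False using not_col_two[OF PP(1) la(1) pnl(1) la(2), of a'] a' colpa by blast
    qed
    moreover have "k1 \<noteq> lq"
    proof
      assume "k1 = lq"
      then have "collinear L q a'" using line_col[OF lq(1) lq(3)] k1 by simp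
      then show False using not_col_two[OF PP(2) la(1) pnl(3) la(2), of a'] a' colpa by blast
    qed
    moreover have "k2 \<noteq> lp"
    proof
      assume "k2 = lp"
      then have "collinear L p b'" using line_col[OF lp(1) lp(3)] k2 by simp
      then show False using not_col_two[OF PP(1) lb(1) pnl(2) lb(2), of b'] b' colpb by blast
    qed
    moreover have "k2 \<noteq> lq"
    proof
      assume "k2 = lq"
      then have "collinear L q b'" using line_col[OF lq(1) lq(3)] k2 by simp
      then show False using not_col_two[OF PP(2) lb(1) pnl(4) lb(2), of b'] b' colpb by blast
    qed
    moreover have "k1 \<noteq> k2"
    proof
      assume "k1 = k2"
      then have c1: "collinear L b' a'" using line_col[OF k2(1) k2(3)] k1 by simp
      have c2: "collinear L b' r" using line_col[OF lb(1)] lb(3) b'(1) by blast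
      have b'P: "b' \<in> P" using line_sub[OF lb(1)] b'(1) by blast
      show False using not_col_two[OF b'P la(1) b'nla la(3), of a'] a' c1 c2 by blast
    qed
    ultimately have "card {lp,lq,k1,k2} = 4" by auto
    moreover have "{lp,lq,k1,k2} \<subseteq> {l\<in>L. c \<in> l}" using lp lq k1 k2 by blast
    moreover have "finite {l\<in>L. c \<in> l}" using lines_card[OF cP] by (metis card.infinite zero_neq_numeral)
    ultimately have "4 \<le> card {l\<in>L. c \<in> l}" by (metis card_mono)
    then show False using lines_card[OF cP] by simp
  qed
  have "setperp P L D = E"
  proof
    show "setperp P L D \<subseteq> E"
    proof
      fix y assume "y \<in> setperp P L D"
      then have "y \<in> perp P L p" "y \<in> perp P L q" using pD unfolding setperp_iff by blast+
      then show "y \<in> E" unfolding E_def setperp2 by blast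
    qed
    show "E \<subseteq> setperp P L D"
    proof
      fix y assume y: "y \<in> E"
      have yP: "y \<in> P" using y setperp_P unfolding E_def by metis
      have "y \<in> perp P L p" "y \<in> perp P L q" using y unfolding E_def setperp2 by auto
      moreover have "y \<in> perp P L r"
      proof -
        have "y = a \<or> y = b \<or> y = c" using y c(1) by blast
        then show ?thesis using claim perp_sym[OF aP] perp_sym[OF bP] perpD[OF pD(3)] by blast
      qed
      ultimately show "y \<in> setperp P L D" unfolding setperp_iff pqr(1) using yP by blast
    qed
  qed
  then show ?thesis unfolding D_def using cE by simp
qed

end


definition ledge :: "'a set \<Rightarrow> 'a set set \<Rightarrow> 'a \<Rightarrow> 'a \<Rightarrow> 'a \<Rightarrow> 'a \<Rightarrow> bool" where
  "ledge P L a p b q \<longleftrightarrow> (\<exists>A. A \<subseteq> P \<and> card A = 3 \<and> (A \<in> L \<or> complete_triad P L A) \<and>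
     card (setperp P L A) = 3 \<and> a \<in> A \<and> b \<in> A \<and> a \<noteq> b \<and>
     p \<in> setperp P L A \<and> q \<in> setperp P L A \<and> p \<noteq> q)"

context gqloc
begin

lemma line_edge:
  assumes "l \<in> L" "a \<in> l" "b \<in> l" "p \<in> l" "q \<in> l" "a \<noteq> b" "p \<noteq> q"
  shows "ledge P L a p b q"
  unfolding ledge_def
  apply (rule exI[of _ l])
  using assms line_sub[OF assms(1)] line_card[OF assms(1)] setperp_line[OF assms(1)] by simp

lemma triad_edge:
  assumes "complete_triad P L A" "a \<in> A" "b \<in> A" "a \<noteq> b"
    "p \<in> setperp P L A" "q \<in> setperp P L A" "p \<noteq> q"
  shows "ledge P L a p b q"
  unfolding ledge_def
  apply (rule exI[of _ A])
  using assms unfolding complete_triad_def triad_def by simp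

lemma no2:
  assumes XP: "X \<in> P" and YP: "Y \<in> P" and ZP: "Z \<in> P"
    and XY: "X \<noteq> Y" and XZ: "X \<noteq> Z" and YZ: "Y \<noteq> Z"
    and u: "u \<in> perp P L X" "u \<in> perp P L Y" "u \<in> perp P L Z"
    and w: "w \<in> perp P L X" "w \<in> perp P L Y" "w \<in> perp P L Z"
    and uw: "u \<noteq> w"
    and v: "v \<in> perp P L Y" "v \<in> perp P L Z" "v \<notin> perp P L X"
    and A: "A \<subseteq> P" "card A = 3" "Y \<in> A" "Z \<in> A" "w \<in> setperp P L A" "v \<in> setperp P L A"
      "card (setperp P L A) = 3"
  shows False
proof -
  have uP: "u \<in> P" using u(1) perp_P by metis
  have wP: "w \<in> P" using w(1) perp_P by metis
  have Xu: "X \<in> perp P L u" using perp_sym[OF XP u(1)] .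
  have Yu: "Y \<in> perp P L u" using perp_sym[OF YP u(2)] .
  have Zu: "Z \<in> perp P L u" using perp_sym[OF ZP u(3)] .
  have Xw: "X \<in> perp P L w" using perp_sym[OF XP w(1)] .
  have Yw: "Y \<in> perp P L w" using perp_sym[OF YP w(2)] .
  have Zw: "Z \<in> perp P L w" using perp_sym[OF ZP w(3)] .
  have c3: "card {X,Y,Z} = 3" using XY XZ YZ by simp
  show False
  proof (cases "collinear L u w")
    case True
    then obtain l where l: "l \<in> L" "u \<in> l" "w \<in> l" unfolding collinear_def by blast
    have "X \<in> l" using on_line_perp[OF l(1) uw l(2,3) Xu Xw] .
    moreover have "Y \<in> l" using on_line_perp[OF l(1) uw l(2,3) Yu Yw] .
    moreover have "Z \<in> l" using on_line_perp[OF l(1) uw l(2,3) Zu Zw] .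
    moreover have "v \<in> l" using on_line_perp[OF l(1) YZ calculation(2,3) v(1,2)] .
    ultimately have "collinear L X v" using line_col[OF l(1)] by blast
    then have "v \<in> perp P L X" using col_perp perp_P v(1) by metis
    then show False using v(3) by simp
  next
    case False
    define S where "S = setperp P L {u,w}"
    have cS: "card S = 3" unfolding S_def using perp2_card[OF uP wP uw False] .
    have finS: "finite S" using cS by (metis card.infinite zero_neq_numeral)
    have sub: "{X,Y,Z} \<subseteq> S" unfolding S_def using Xu Xw Yu Yw Zu Zw by (simp add: setperp2)
    have SXYZ: "S = {X,Y,Z}" using card_subset_eq[OF finS sub] c3 cS by simp
    have YS: "Y \<in> S" and ZS: "Z \<in> S" using sub by auto
    have ncYZ: "\<not> collinear L Y Z" using noncol_pair[OF uP wP uw False] YS ZS YZ unfolding S_def by blast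
    have cYZ: "card (setperp P L {Y,Z}) = 3" using perp2_card[OF YP ZP YZ ncYZ] .
    have finYZ: "finite (setperp P L {Y,Z})" using cYZ by (metis card.infinite zero_neq_numeral)
    have subA: "setperp P L A \<subseteq> setperp P L {Y,Z}"
    proof
      fix y assume "y \<in> setperp P L A"
      then have "y \<in> perp P L Y" "y \<in> perp P L Z" using A(3,4) unfolding setperp_iff by blast+
      then show "y \<in> setperp P L {Y,Z}" unfolding setperp2 by blast
    qed
    have eqA: "setperp P L A = setperp P L {Y,Z}" using card_subset_eq[OF finYZ subA] A(7) cYZ by simp
    have "u \<in> setperp P L {Y,Z}" unfolding setperp2 using u by blast
    then have uA: "u \<in> setperp P L A" using eqA by simp
    have AS: "A \<subseteq> S"
    proof
      fix a assume a: "a \<in> A"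
      have aP: "a \<in> P" using a A(1) by blast
      have "u \<in> perp P L a" "w \<in> perp P L a" using uA A(5) a unfolding setperp_iff by blast+
      then have "a \<in> perp P L u" "a \<in> perp P L w" using perp_sym[OF aP] by blast+
      then show "a \<in> S" unfolding S_def setperp2 by blast
    qed
    have "A = S" using card_subset_eq[OF finS AS] A(2) cS by simp
    then have "X \<in> A" using SXYZ by simp
    then have "v \<in> perp P L X" using A(6) unfolding setperp_iff by blast
    then show False using v(3) by simp
  qed
qed


lemma perp_self: "X \<in> P \<Longrightarrow> X \<in> perp P L X"
  unfolding perp_iff by blast

lemma path3:
  assumes XP: "X \<in> P" and YP: "Y \<in> P" and XY: "X \<noteq> Y"
    and u: "u \<in> perp P L X" "u \<in> perp P L Y"
    and v: "v \<in> perp P L Y" "v \<notin> perp P L X"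
  shows "\<exists>a1 p1 a2 p2. ledge P L X u a1 p1 \<and> ledge P L a1 p1 a2 p2 \<and> ledge P L a2 p2 Y v"
proof -
  have uP: "u \<in> P" by (rule perp_P[OF u(1)])
  have vP: "v \<in> P" by (rule perp_P[OF v(1)])
  have Xv: "X \<noteq> v"
  proof
    assume "X = v" then show False using v(2) perp_self[OF XP] by simp
  qed
  have ncXv: "\<not> collinear L X v"
  proof
    assume "collinear L X v"
    then have "v \<in> perp P L X" by (rule col_perp) (rule vP)
    then show False using v(2) by simp
  qed
  show ?thesis
  proof (cases "collinear L X Y")
    case True
    then obtain m where m: "m \<in> L" "X \<in> m" "Y \<in> m" unfolding collinear_def by blast
    have um: "u \<in> m" using on_line_perp[OF m(1) XY m(2,3) u] .
    have YpX: "Y \<in> perp P L X" using col_perp[OF True YP] .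
    have vY: "v \<noteq> Y" using YpX v(2) by metis
    obtain n where n: "n \<in> L" "Y \<in> n" "v \<in> n" using perp_col[OF v(1) vY] unfolding collinear_def by blast
    obtain t where t: "n = {Y,v,t}" "t \<noteq> Y" "t \<noteq> v"
      using card3_third[OF line_card[OF n(1)] n(2,3) vY[symmetric]] by blast
    have tn: "t \<in> n" using t(1) by blast
    show ?thesis
    proof (cases "u = Y")
      case False
      have e1: "ledge P L X u Y Y" using line_edge[OF m(1) m(2) m(3) um m(3) XY False] .
      have e2: "ledge P L Y Y t t" using line_edge[OF n(1) n(2) tn n(2) tn t(2)[symmetric] t(2)[symmetric]] .
      have e3: "ledge P L t t Y v" using line_edge[OF n(1) tn n(2) tn n(3) t(2) t(3)] .
      show ?thesis using e1 e2 e3 by blast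
    next
      case uY: True
      define D where "D = setperp P L {X,v}"
      have cD: "card D = 3" unfolding D_def using perp2_card[OF XP vP Xv ncXv] .
      have YD: "Y \<in> D" unfolding D_def setperp2 using YpX col_perp[OF line_col[OF n(1) n(3) n(2)] YP] by blast
      obtain c where c: "c \<in> D" "c \<noteq> Y" by (rule card3_other[OF cD YD])
      have DP: "D \<subseteq> P" unfolding D_def using setperp_P by (metis subsetI)
      have ct: "complete_triad P L D"
        unfolding complete_triad_def triad_def
      proof (intro conjI ballI impI)
        show "D \<subseteq> P" using DP .
        show "card D = 3" using cD .
        show "\<not> collinear L a b" if "a \<in> D" "b \<in> D" "a \<noteq> b" for a b
          using noncol_pair[OF XP vP Xv ncXv] that unfolding D_def by blast
        show "card (setperp P L D) = 3" unfolding D_def using regular[OF XP vP Xv ncXv] .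
      qed
      have cpD: "card (setperp P L D) = 3" using ct unfolding complete_triad_def by blast
      have XsD: "X \<in> setperp P L D"
        unfolding setperp_iff
      proof (intro conjI ballI)
        show "X \<in> P" using XP .
        fix d assume "d \<in> D"
        then have "d \<in> perp P L X" unfolding D_def setperp2 by blast
        then show "X \<in> perp P L d" using perp_sym[OF XP] by blast
      qed
      have vsD: "v \<in> setperp P L D"
        unfolding setperp_iff
      proof (intro conjI ballI)
        show "v \<in> P" using vP .
        fix d assume "d \<in> D"
        then have "d \<in> perp P L v" unfolding D_def setperp2 by blast
        then show "v \<in> perp P L d" using perp_sym[OF vP] by blast
      qed
      obtain r where r: "r \<in> setperp P L D" "r \<noteq> X" "r \<noteq> v" using card3_other2[OF cpD] by blast
      have e1: "ledge P L X Y Y X" using line_edge[OF m(1) m(2) m(3) m(3) m(2) XY XY[symmetric]] .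
      have e2: "ledge P L Y X c r" using triad_edge[OF ct YD c(1) c(2)[symmetric] XsD r(1) r(2)[symmetric]] .
      have e3: "ledge P L c r Y v" using triad_edge[OF ct c(1) YD c(2) r(1) vsD r(3)] .
      show ?thesis using e1 e2 e3 uY by blast
    qed
  next
    case ncXY: False
    define D where "D = setperp P L {X,Y}"
    have cD: "card D = 3" unfolding D_def using perp2_card[OF XP YP XY ncXY] .
    have uD: "u \<in> D" unfolding D_def setperp2 using u by blast
    have YnpX: "Y \<notin> perp P L X" using ncXY XY perp_col by metis
    have XnpY: "X \<notin> perp P L Y" using ncXY XY perp_col collinear_sym by metis
    have uX: "u \<noteq> X" using u(2) XnpY by metis
    have uY: "u \<noteq> Y" using u(1) YnpX by metis
    obtain h where h: "h \<in> L" "X \<in> h" "u \<in> h" using perp_col[OF u(1) uX] unfolding collinear_def by blast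
    obtain h3 where h3: "h = {X,u,h3}" "h3 \<noteq> X" "h3 \<noteq> u"
      using card3_third[OF line_card[OF h(1)] h(2,3) uX[symmetric]] by blast
    have h3h: "h3 \<in> h" using h3(1) by blast
    have h3P: "h3 \<in> P" using line_sub[OF h(1)] h3h by blast
    have Ynh: "Y \<notin> h" using ncXY line_col[OF h(1) h(2)] by blast
    show ?thesis
    proof (cases "v = Y")
      case vY: True
      have h3Y: "h3 \<noteq> Y" using Ynh h3h by blast
      have nc3: "\<not> collinear L h3 Y"
      proof
        assume "collinear L h3 Y"
        then have c1: "collinear L Y h3" using collinear_sym by metis
        have c2: "collinear L Y u" using perp_col[OF u(2) uY] .
        show False using not_col_two[OF YP h(1) Ynh h(3) h3h h3(3)[symmetric] c2 c1] .
      qed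
      define D' where "D' = setperp P L {h3,Y}"
      have cD': "card D' = 3" unfolding D'_def using perp2_card[OF h3P YP h3Y nc3] .
      obtain b where b: "b \<in> D'" "b \<noteq> h3" "b \<noteq> Y" using card3_other2[OF cD'] by blast
      have bh: "b \<in> perp P L h3" "b \<in> perp P L Y" using b(1) unfolding D'_def setperp2 by auto
      obtain k where k: "k \<in> L" "h3 \<in> k" "b \<in> k" using perp_col[OF bh(1) b(2)] unfolding collinear_def by blast
      obtain kk where kk: "kk \<in> L" "Y \<in> kk" "b \<in> kk" using perp_col[OF bh(2) b(3)] unfolding collinear_def by blast
      have e1: "ledge P L X u h3 h3" using line_edge[OF h(1) h(2) h3h h(3) h3h h3(2)[symmetric] h3(3)[symmetric]] .
      have e2: "ledge P L h3 h3 b b" using line_edge[OF k(1) k(2) k(3) k(2) k(3) b(2)[symmetric] b(2)[symmetric]] .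
      have e3: "ledge P L b b Y Y" using line_edge[OF kk(1) kk(3) kk(2) kk(3) kk(2) b(3) b(3)] .
      show ?thesis using e1 e2 e3 vY by blast
    next
      case vY: False
      obtain n where n: "n \<in> L" "Y \<in> n" "v \<in> n" using perp_col[OF v(1) vY] unfolding collinear_def by blast
      obtain t where t: "n = {Y,v,t}" "t \<noteq> Y" "t \<noteq> v"
        using card3_third[OF line_card[OF n(1)] n(2,3) vY[symmetric]] by blast
      have tn: "t \<in> n" using t(1) by blast
      have uv: "u \<noteq> v" using u(1) v(2) by metis
      show ?thesis
      proof (cases "u \<in> n")
        case True
        have e1: "ledge P L X u h3 X" using line_edge[OF h(1) h(2) h3h h(3) h(2) h3(2)[symmetric] uX] .
        have e2: "ledge P L h3 X u u" using line_edge[OF h(1) h3h h(3) h(2) h(3) h3(3) uX[symmetric]] .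
        have e3: "ledge P L u u Y v" using line_edge[OF n(1) True n(2) True n(3) uY uv] .
        show ?thesis using e1 e2 e3 by blast
      next
        case unn: False
        have Xnn: "X \<notin> n" using ncXY line_col[OF n(1) _ n(2)] by blast
        obtain z where z: "z \<in> n" "collinear L X z" using gq_ex[OF XP n(1) Xnn] by blast
        have "z \<noteq> Y" using z(2) ncXY by blast
        moreover have "z \<noteq> v" using z(2) ncXv by blast
        ultimately have zt: "z = t" using z(1) t(1) by blast
        have tP: "t \<in> P" using line_sub[OF n(1)] tn by blast
        have tD: "t \<in> D" unfolding D_def setperp2
        proof -
          have "collinear L X t" using z(2) zt by simp
          then show "t \<in> perp P L X \<and> t \<in> perp P L Y"
            using col_perp[OF _ tP] col_perp[OF line_col[OF n(1) n(2) tn] tP] by blast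
        qed
        have tu: "t \<noteq> u" using unn tn by blast
        define T where "T = setperp P L D"
        have cT: "card T = 3" unfolding T_def D_def using regular[OF XP YP XY ncXY] .
        have XT0: "X \<in> setperp P L D"
        unfolding setperp_iff
      proof (intro conjI ballI)
        show "X \<in> P" using XP .
        fix d assume "d \<in> D"
        then have "d \<in> perp P L X" unfolding D_def setperp2 by blast
        then show "X \<in> perp P L d" using perp_sym[OF XP] by blast
      qed
        have XT: "X \<in> T" unfolding T_def using XT0 .
        have YT0: "Y \<in> setperp P L D"
        unfolding setperp_iff
      proof (intro conjI ballI)
        show "Y \<in> P" using YP .
        fix d assume "d \<in> D"
        then have "d \<in> perp P L Y" unfolding D_def setperp2 by blast
        then show "Y \<in> perp P L d" using perp_sym[OF YP] by blast
      qed
        have YT: "Y \<in> T" unfolding T_def using YT0 .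
        have TP: "T \<subseteq> P" unfolding T_def using setperp_P by (metis subsetI)
        have DP: "D \<subseteq> P" unfolding D_def using setperp_P by (metis subsetI)
        have sT: "setperp P L T = D"
        proof
          show "setperp P L T \<subseteq> D"
          proof
            fix y assume "y \<in> setperp P L T"
            then have "y \<in> perp P L X" "y \<in> perp P L Y" using XT YT unfolding setperp_iff by blast+
            then show "y \<in> D" unfolding D_def setperp2 by blast
          qed
          show "D \<subseteq> setperp P L T"
          proof
            fix d assume d: "d \<in> D"
            have dP: "d \<in> P" using d DP by blast
            have "\<forall>\<tau>\<in>T. d \<in> perp P L \<tau>"
            proof
              fix \<tau> assume "\<tau> \<in> T"
              then have "\<tau> \<in> perp P L d" using d unfolding T_def setperp_iff by blast
              then show "d \<in> perp P L \<tau>" using perp_sym[OF dP] by blast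
            qed
            then show "d \<in> setperp P L T" unfolding setperp_iff using dP by blast
          qed
        qed
        obtain u2 where u2: "u2 \<in> D" "u2 \<noteq> u" using card3_other[OF cD uD] by blast
        have ncu: "\<not> collinear L u u2"
          using noncol_pair[OF XP YP XY ncXY] uD u2 unfolding D_def by metis
        have u2P: "u2 \<in> P" using u2(1) DP by blast
        have ct: "complete_triad P L T"
          unfolding complete_triad_def triad_def
        proof (intro conjI ballI impI)
          show "T \<subseteq> P" using TP .
          show "card T = 3" using cT .
          show "\<not> collinear L a b" if "a \<in> T" "b \<in> T" "a \<noteq> b" for a b
          proof -
            have "a \<in> setperp P L {u,u2}" "b \<in> setperp P L {u,u2}"
              using that uD u2(1) unfolding T_def setperp_iff setperp2 by blast+
            then show ?thesis using noncol_pair[OF uP u2P u2(2)[symmetric] ncu] that(3) by blast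
          qed
          show "card (setperp P L T) = 3" using sT cD by simp
        qed
        have e1: "ledge P L X u Y t"
          using triad_edge[OF ct XT YT XY _ _ tu[symmetric]] uD tD sT by simp
        have e2: "ledge P L Y t v Y" using line_edge[OF n(1) n(2) n(3) tn n(2) vY[symmetric] t(2)] .
        have e3: "ledge P L v Y Y v" using line_edge[OF n(1) n(3) n(2) n(2) n(3) vY vY[symmetric]] .
        show ?thesis using e1 e2 e3 by blast
      qed
    qed
  qed
qed

end


locale iso2 = S: gqloc P L + S': gqloc P' L'
  for P :: "'p set" and L :: "'p set set" and P' :: "'q set" and L' :: "'q set set" +
  fixes f :: "'p \<Rightarrow> 'q"
  assumes iso: "geom_iso f P L P' L'"
begin

definition g where "g = inv_into P f"

lemma inj: "inj_on f P" using iso unfolding geom_iso_def bij_betw_def by blast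
lemma img: "f ` P = P'" using iso unfolding geom_iso_def bij_betw_def by blast
lemma Limg: "L' = (\<lambda>l. f ` l) ` L" using iso unfolding geom_iso_def by blast

lemma gP: "y \<in> P' \<Longrightarrow> g y \<in> P"
  unfolding g_def using inv_into_into img by metis
lemma fg: "y \<in> P' \<Longrightarrow> f (g y) = y"
  unfolding g_def using f_inv_into_f img by metis
lemma gf: "x \<in> P \<Longrightarrow> g (f x) = x"
  unfolding g_def using inv_into_f_f inj by metis
lemma fP: "x \<in> P \<Longrightarrow> f x \<in> P'"
  using img by blast

lemma perp_tr:
  assumes aP: "a \<in> P" and bP: "b \<in> P"
  shows "f b \<in> perp P' L' (f a) \<longleftrightarrow> b \<in> perp P L a"
proof
  assume "b \<in> perp P L a"
  then have "b = a \<or> collinear L a b" unfolding perp_iff by blast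
  then show "f b \<in> perp P' L' (f a)"
  proof
    assume "b = a" then show ?thesis using fP[OF aP] unfolding perp_iff by blast
  next
    assume "collinear L a b"
    then obtain l where l: "l \<in> L" "a \<in> l" "b \<in> l" unfolding collinear_def by blast
    have "f ` l \<in> L'" using l(1) Limg by blast
    then have "collinear L' (f a) (f b)" unfolding collinear_def using l by blast
    then show ?thesis using fP[OF bP] unfolding perp_iff by blast
  qed
next
  assume "f b \<in> perp P' L' (f a)"
  then have "f b = f a \<or> collinear L' (f a) (f b)" unfolding perp_iff by blast
  then show "b \<in> perp P L a"
  proof
    assume "f b = f a" then have "b = a" using inj aP bP inj_on_def by metis
    then show ?thesis using aP unfolding perp_iff by blast
  next
    assume "collinear L' (f a) (f b)"
    then obtain l' where l': "l' \<in> L'" "f a \<in> l'" "f b \<in> l'" unfolding collinear_def by blast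
    then obtain l where l: "l \<in> L" "l' = f ` l" using Limg by blast
    have lP: "l \<subseteq> P" using S.line_sub[OF l(1)] .
    have "a \<in> l" using l' l lP aP inj by (metis inj_on_image_mem_iff)
    moreover have "b \<in> l" using l' l lP bP inj by (metis inj_on_image_mem_iff)
    ultimately have "collinear L a b" unfolding collinear_def using l(1) by blast
    then show ?thesis using bP unfolding perp_iff by blast
  qed
qed

lemma setperp_tr:
  assumes TP: "T \<subseteq> P"
  shows "setperp P' L' (f ` T) = f ` setperp P L T"
proof
  show "setperp P' L' (f ` T) \<subseteq> f ` setperp P L T"
  proof
    fix y assume y: "y \<in> setperp P' L' (f ` T)"
    have yP: "y \<in> P'" using y setperp_P by metis
    define b where "b = g y"
    have bP: "b \<in> P" unfolding b_def using gP[OF yP] .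
    have fb: "f b = y" unfolding b_def using fg[OF yP] .
    have "\<forall>t\<in>T. b \<in> perp P L t"
    proof
      fix t assume t: "t \<in> T"
      have "y \<in> perp P' L' (f t)" using y t unfolding setperp_iff by blast
      then show "b \<in> perp P L t" using perp_tr[of t b] t TP bP fb by blast
    qed
    then have "b \<in> setperp P L T" unfolding setperp_iff using bP by blast
    then show "y \<in> f ` setperp P L T" using fb by blast
  qed
  show "f ` setperp P L T \<subseteq> setperp P' L' (f ` T)"
  proof
    fix y assume "y \<in> f ` setperp P L T"
    then obtain b where b: "b \<in> setperp P L T" "y = f b" by blast
    have bP: "b \<in> P" using b(1) setperp_P by metis
    have "\<forall>t'\<in>f ` T. y \<in> perp P' L' t'"
    proof
      fix t' assume "t' \<in> f ` T"
      then obtain t where t: "t \<in> T" "t' = f t" by blast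
      have "b \<in> perp P L t" using b(1) t(1) unfolding setperp_iff by blast
      then show "y \<in> perp P' L' t'" using perp_tr[of t b] t TP bP b(2) by blast
    qed
    then show "y \<in> setperp P' L' (f ` T)" unfolding setperp_iff using fP[OF bP] b(2) by blast
  qed
qed

lemma gimg: "A \<subseteq> P' \<Longrightarrow> f ` (g ` A) = A"
proof -
  assume A: "A \<subseteq> P'"
  have "f ` (g ` A) = (\<lambda>y. f (g y)) ` A" by (simp add: image_image)
  also have "\<dots> = A" using fg A by (simp add: subset_iff)
  finally show ?thesis .
qed

lemma gimgP: "A \<subseteq> P' \<Longrightarrow> g ` A \<subseteq> P"
  using gP by blast

lemma pull_line:
  assumes "A \<in> L'" shows "g ` A \<in> L"
proof -
  obtain l where l: "l \<in> L" "A = f ` l" using assms Limg by blast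
  have lP: "l \<subseteq> P" using S.line_sub[OF l(1)] .
  have "g ` A = (\<lambda>x. g (f x)) ` l" unfolding l(2) by (simp add: image_image)
  also have "\<dots> = l" using gf lP by (simp add: subset_iff)
  finally show ?thesis using l(1) by simp
qed

lemma pull_ct:
  assumes ct: "complete_triad P' L' A" shows "complete_triad P L (g ` A)"
proof -
  have AP: "A \<subseteq> P'" and cA: "card A = 3"
    and nc: "\<And>a b. a \<in> A \<Longrightarrow> b \<in> A \<Longrightarrow> a \<noteq> b \<Longrightarrow> \<not> collinear L' a b"
    and cs: "card (setperp P' L' A) = 3"
    using ct unfolding complete_triad_def triad_def by blast+
  have injg: "inj_on g A" unfolding g_def using inj_on_inv_into img AP by metis
  have TP: "g ` A \<subseteq> P" using gimgP[OF AP] .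
  have fT: "f ` (g ` A) = A" using gimg[OF AP] .
  have cT: "card (g ` A) = 3" using card_image[OF injg] cA by simp
  have ncT: "\<not> collinear L a b" if "a \<in> g ` A" "b \<in> g ` A" "a \<noteq> b" for a b
  proof
    assume "collinear L a b"
    then obtain l where l: "l \<in> L" "a \<in> l" "b \<in> l" unfolding collinear_def by blast
    have "f ` l \<in> L'" using l(1) Limg by blast
    then have c: "collinear L' (f a) (f b)" unfolding collinear_def using l by blast
    have "f a \<in> A" "f b \<in> A" using that fT by blast+
    moreover have "f a \<noteq> f b" using that TP inj inj_on_def by (metis subsetD)
    ultimately show False using nc c by blast
  qed
  have "setperp P' L' A = f ` setperp P L (g ` A)" using setperp_tr[OF TP] fT by simp
  moreover have "setperp P L (g ` A) \<subseteq> P" using setperp_P by (metis subsetI)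
  ultimately have "card (setperp P' L' A) = card (setperp P L (g ` A))"
    using card_image[OF inj_on_subset[OF inj]] by metis
  then have cs': "card (setperp P L (g ` A)) = 3" using cs by simp
  show ?thesis unfolding complete_triad_def triad_def
    using TP cT ncT cs' by blast
qed


lemma bigPoints_iff: "(a, p) \<in> bigPoints P L P' L' f \<longleftrightarrow> a \<in> P \<and> p \<in> perp P' L' (f a)"
  unfolding bigPoints_def by simp

lemma edge:
  assumes le: "ledge P' L' a p b q"
  shows "((g a, p), (g b, q)) \<in> bigAdj P L P' L' f"
proof -
  obtain A where A: "A \<subseteq> P'" "card A = 3" "A \<in> L' \<or> complete_triad P' L' A"
    "card (setperp P' L' A) = 3" "a \<in> A" "b \<in> A" "a \<noteq> b"
    "p \<in> setperp P' L' A" "q \<in> setperp P' L' A" "p \<noteq> q"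
    using le unfolding ledge_def by blast
  obtain c where c: "A = {a,b,c}" "c \<noteq> a" "c \<noteq> b" by (rule card3_third[OF A(2) A(5) A(6) A(7)])
  obtain r where r: "setperp P' L' A = {p,q,r}" "r \<noteq> p" "r \<noteq> q"
    by (rule card3_third[OF A(4) A(8) A(9) A(10)])
  have aP: "a \<in> P'" and bP: "b \<in> P'" and cP: "c \<in> P'" using A(1) c(1) by blast+
  have ga: "f (g a) = a" using fg[OF aP] .
  have gb: "f (g b) = b" using fg[OF bP] .
  have gc: "f (g c) = c" using fg[OF cP] .
  have d1: "g a \<noteq> g b" using ga gb A(7) by metis
  have d2: "g a \<noteq> g c" using ga gc c(2) by metis
  have d3: "g b \<noteq> g c" using gb gc c(3) by metis
  have gA: "g ` A = {g a, g b, g c}" using c(1) by simp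
  have fT: "f ` {g a, g b, g c} = A" using ga gb gc c(1) by simp
  have TL: "{g a, g b, g c} \<in> L \<or> complete_triad P L {g a, g b, g c}"
    using A(3) pull_line pull_ct gA by metis
  have pA: "p \<in> perp P' L' a" using A(8) A(5) unfolding setperp_iff by blast
  have qA: "q \<in> perp P' L' b" using A(9) A(6) unfolding setperp_iff by blast
  have rA: "r \<in> perp P' L' c"
  proof -
    have "r \<in> setperp P' L' A" using r(1) by blast
    then show ?thesis using c(1) unfolding setperp_iff by blast
  qed
  have pts: "{(g a, p), (g b, q), (g c, r)} \<subseteq> bigPoints P L P' L' f"
    unfolding bigPoints_iff using pA qA rA ga gb gc gP[OF aP] gP[OF bP] gP[OF cP]
    by (simp add: bigPoints_iff)
  have dist1: "distinct [g a, g b, g c]" using d1 d2 d3 by simp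
  have dist2: "distinct [p, q, r]" using A(10) r(2,3) by auto
  have sp: "{p, q, r} = setperp P' L' (f ` {g a, g b, g c})" using r(1) fT by simp
  have "{(g a, p), (g b, q), (g c, r)} \<in> bigLines P L P' L' f"
    unfolding bigLines_def mem_Collect_eq
    apply (rule exI[of _ "g a"], rule exI[of _ "g b"], rule exI[of _ "g c"])
    apply (rule exI[of _ p], rule exI[of _ q], rule exI[of _ r])
    using dist1 dist2 TL sp pts by simp
  then show ?thesis unfolding bigAdj_def using d1 by blast
qed

lemma adj_facts:
  assumes e: "((a, p), (b, q)) \<in> bigAdj P L P' L' f"
  shows "a \<noteq> b \<and> p \<noteq> q \<and> a \<in> P \<and> b \<in> P \<and>
    (\<exists>A. A \<subseteq> P' \<and> card A = 3 \<and> f a \<in> A \<and> f b \<in> A \<and> p \<in> setperp P' L' A \<and>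
         q \<in> setperp P' L' A \<and> card (setperp P' L' A) = 3)"
proof -
  obtain l where l: "l \<in> bigLines P L P' L' f" "(a,p) \<in> l" "(b,q) \<in> l" "(a,p) \<noteq> (b,q)"
    using e unfolding bigAdj_def by blast
  obtain x y z u v w where xyz: "l = {(x, u), (y, v), (z, w)}" "distinct [x, y, z]"
    "distinct [u, v, w]" "{u, v, w} = setperp P' L' (f ` {x, y, z})"
    "{(x, u), (y, v), (z, w)} \<subseteq> bigPoints P L P' L' f"
    using l(1) unfolding bigLines_def mem_Collect_eq
    apply (elim exE conjE)
    apply (rule that)
        apply assumption+
    done
  have xP: "x \<in> P" "y \<in> P" "z \<in> P" using xyz(5) unfolding bigPoints_iff by (simp_all add: bigPoints_iff)
  define A where "A = f ` {x, y, z}"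
  have AP: "A \<subseteq> P'" unfolding A_def using xP fP by blast
  have injs: "inj_on f {x,y,z}" using inj_on_subset[OF inj] xP by blast
  have cA: "card A = 3" unfolding A_def using card_image[OF injs] xyz(2) by simp
  have sA: "setperp P' L' A = {u,v,w}" unfolding A_def using xyz(4) by simp
  have cS: "card (setperp P' L' A) = 3" unfolding sA using xyz(3) by simp
  have ap: "(a = x \<and> p = u) \<or> (a = y \<and> p = v) \<or> (a = z \<and> p = w)" using l(2) xyz(1) by simp
  have bq: "(b = x \<and> q = u) \<or> (b = y \<and> q = v) \<or> (b = z \<and> q = w)" using l(3) xyz(1) by simp
  have ne: "a \<noteq> b \<and> p \<noteq> q" using ap bq l(4) xyz(2,3) by auto
  have fa: "f a \<in> A" "f b \<in> A" unfolding A_def using ap bq by auto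
  have pq: "p \<in> setperp P' L' A" "q \<in> setperp P' L' A" unfolding A_def using ap bq xyz(4) by auto
  have abP: "a \<in> P" "b \<in> P" using ap bq xP by auto
  show ?thesis using ne abP AP cA fa pq cS by blast
qed


lemma core:
  assumes xu: "(x, u) \<in> bigPoints P L P' L' f" and yv: "(y, v) \<in> bigPoints P L P' L' f"
    and xy: "x \<noteq> y" and uy: "u \<in> perp P' L' (f y)" and vx: "v \<notin> perp P' L' (f x)"
  shows "((x,u),(y,v)) \<notin> bigAdj P L P' L' f"
    and "\<not> (\<exists>\<gamma>. ((x,u),\<gamma>) \<in> bigAdj P L P' L' f \<and> (\<gamma>,(y,v)) \<in> bigAdj P L P' L' f)"
    and "\<exists>\<gamma>1 \<gamma>2. ((x,u),\<gamma>1) \<in> bigAdj P L P' L' f \<and> (\<gamma>1,\<gamma>2) \<in> bigAdj P L P' L' f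
                 \<and> (\<gamma>2,(y,v)) \<in> bigAdj P L P' L' f"
proof -
  have xP: "x \<in> P" and ux: "u \<in> perp P' L' (f x)" using xu unfolding bigPoints_iff by auto
  have yP: "y \<in> P" and vy: "v \<in> perp P' L' (f y)" using yv unfolding bigPoints_iff by auto
  have XP: "f x \<in> P'" using fP[OF xP] .
  have YP: "f y \<in> P'" using fP[OF yP] .
  have XY: "f x \<noteq> f y" using xy inj xP yP inj_on_def by metis
  show "((x,u),(y,v)) \<notin> bigAdj P L P' L' f"
  proof
    assume "((x,u),(y,v)) \<in> bigAdj P L P' L' f"
    then obtain A where "f x \<in> A" "v \<in> setperp P' L' A" using adj_facts by blast
    then have "v \<in> perp P' L' (f x)" unfolding setperp_iff by blast
    then show False using vx by simp
  qed
  show "\<not> (\<exists>\<gamma>. ((x,u),\<gamma>) \<in> bigAdj P L P' L' f \<and> (\<gamma>,(y,v)) \<in> bigAdj P L P' L' f)"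
  proof
    assume "\<exists>\<gamma>. ((x,u),\<gamma>) \<in> bigAdj P L P' L' f \<and> (\<gamma>,(y,v)) \<in> bigAdj P L P' L' f"
    then obtain z w where e1: "((x,u),(z,w)) \<in> bigAdj P L P' L' f"
      and e2: "((z,w),(y,v)) \<in> bigAdj P L P' L' f" by auto
    obtain A1 where f1: "x \<noteq> z" "u \<noteq> w" "z \<in> P" "f x \<in> A1" "f z \<in> A1"
      "u \<in> setperp P' L' A1" "w \<in> setperp P' L' A1"
      using adj_facts[OF e1] by blast
    obtain A2 where f2: "z \<noteq> y" "w \<noteq> v" "A2 \<subseteq> P'" "card A2 = 3" "f z \<in> A2" "f y \<in> A2"
      "w \<in> setperp P' L' A2" "v \<in> setperp P' L' A2" "card (setperp P' L' A2) = 3"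
      using adj_facts[OF e2] by blast
    have ZP: "f z \<in> P'" using fP[OF f1(3)] .
    have XZ: "f x \<noteq> f z" using f1(1) inj xP f1(3) inj_on_def by metis
    have YZ: "f y \<noteq> f z" using f2(1) inj yP f1(3) inj_on_def by metis
    have uZ: "u \<in> perp P' L' (f z)" using f1(6) f1(5) unfolding setperp_iff by blast
    have wX: "w \<in> perp P' L' (f x)" using f1(7) f1(4) unfolding setperp_iff by blast
    have wZ: "w \<in> perp P' L' (f z)" using f1(7) f1(5) unfolding setperp_iff by blast
    have wY: "w \<in> perp P' L' (f y)" using f2(7) f2(6) unfolding setperp_iff by blast
    have vZ: "v \<in> perp P' L' (f z)" using f2(8) f2(5) unfolding setperp_iff by blast
    show False
      using S'.no2[OF XP YP ZP XY XZ YZ ux uy uZ wX wY wZ f1(2) vy vZ vx f2(3) f2(4) f2(6) f2(5) f2(7) f2(8) f2(9)] .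
  qed
  show "\<exists>\<gamma>1 \<gamma>2. ((x,u),\<gamma>1) \<in> bigAdj P L P' L' f \<and> (\<gamma>1,\<gamma>2) \<in> bigAdj P L P' L' f
                 \<and> (\<gamma>2,(y,v)) \<in> bigAdj P L P' L' f"
  proof -
    obtain a1 p1 a2 p2 where p: "ledge P' L' (f x) u a1 p1" "ledge P' L' a1 p1 a2 p2" "ledge P' L' a2 p2 (f y) v"
      using S'.path3[OF XP YP XY ux uy vy vx] by blast
    have e1: "((x,u),(g a1,p1)) \<in> bigAdj P L P' L' f" using edge[OF p(1)] gf[OF xP] by simp
    have e2: "((g a1,p1),(g a2,p2)) \<in> bigAdj P L P' L' f" using edge[OF p(2)] .
    have e3: "((g a2,p2),(y,v)) \<in> bigAdj P L P' L' f" using edge[OF p(3)] gf[OF yP] by simp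
    show ?thesis using e1 e2 e3 by blast
  qed
qed

end

lemma adj_sym: "(a, b) \<in> bigAdj P L P' L' f \<Longrightarrow> (b, a) \<in> bigAdj P L P' L' f"
  unfolding bigAdj_def by blast

lemma dist3:
  assumes n1: "(\<alpha>, \<beta>) \<notin> E"
    and n2: "\<not> (\<exists>\<gamma>. (\<alpha>,\<gamma>) \<in> E \<and> (\<gamma>,\<beta>) \<in> E)"
    and n0: "\<alpha> \<noteq> \<beta>"
    and p: "(\<alpha>,\<gamma>1) \<in> E" "(\<gamma>1,\<gamma>2) \<in> E" "(\<gamma>2,\<beta>) \<in> E"
  shows "graph_dist_is E \<alpha> \<beta> 3"
  unfolding graph_dist_is_def
proof (intro conjI allI impI)
  have "(\<alpha>,\<beta>) \<in> E ^^ Suc (Suc (Suc 0))"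
    using relpow_Suc_I[OF relpow_Suc_I[OF relpow_Suc_I[OF relpow_0_I p(1)] p(2)] p(3)] .
  then show "(\<alpha>,\<beta>) \<in> E ^^ 3" by (simp add: numeral_3_eq_3)
  fix m :: nat assume "m < 3"
  then have "m = 0 \<or> m = 1 \<or> m = 2" by auto
  then show "(\<alpha>,\<beta>) \<notin> E ^^ m"
  proof (elim disjE)
    assume "m = 0" then show ?thesis using n0 by simp
  next
    assume "m = 1" then show ?thesis using n1 by simp
  next
    assume m2: "m = 2"
    show ?thesis
    proof
      assume "(\<alpha>,\<beta>) \<in> E ^^ m"
      then have "(\<alpha>,\<beta>) \<in> E ^^ Suc (Suc 0)" using m2 by (simp add: numeral_2_eq_2)
      then obtain \<gamma> where "(\<alpha>,\<gamma>) \<in> E ^^ Suc 0" "(\<gamma>,\<beta>) \<in> E" by (rule relpow_Suc_E)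
      then show False using n2 by auto
    qed
  qed
qed

theorem lemma3p3:
  fixes P :: "'p set" and L :: "'p set set" and P' :: "'q set" and L' :: "'q set set"
    and f :: "'p \<Rightarrow> 'q" and x y :: 'p and u v :: 'q
  assumes "gq22 P L" and "gq22 P' L'" and "geom_iso f P L P' L'"
    and "(x, u) \<in> bigPoints P L P' L' f" and "(y, v) \<in> bigPoints P L P' L' f"
    and "x \<noteq> y" and "u \<noteq> v"
    and "(u \<in> perp P' L' (f y) \<and> v \<notin> perp P' L' (f x)) \<or>
         (u \<notin> perp P' L' (f y) \<and> v \<in> perp P' L' (f x))"
  shows "graph_dist_is (bigAdj P L P' L' f) (x, u) (y, v) 3"
proof -
  interpret I: iso2 P L P' L' f
    using assms(1-3) unfolding iso2_def gqloc_def iso2_axioms_def by blast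
  have n0: "(x,u) \<noteq> (y,v)" using assms(6) by simp
  from assms(8) show ?thesis
  proof
    assume h: "u \<in> perp P' L' (f y) \<and> v \<notin> perp P' L' (f x)"
    note c = I.core[OF assms(4) assms(5) assms(6) h[THEN conjunct1] h[THEN conjunct2]]
    obtain \<gamma>1 \<gamma>2 where "((x,u),\<gamma>1) \<in> bigAdj P L P' L' f" "(\<gamma>1,\<gamma>2) \<in> bigAdj P L P' L' f"
      "(\<gamma>2,(y,v)) \<in> bigAdj P L P' L' f" using c(3) by blast
    then show ?thesis using dist3[OF c(1) c(2) n0] by blast
  next
    assume h: "u \<notin> perp P' L' (f y) \<and> v \<in> perp P' L' (f x)"
    note c = I.core[OF assms(5) assms(4) assms(6)[symmetric] h[THEN conjunct2] h[THEN conjunct1]]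
    obtain \<gamma>1 \<gamma>2 where g: "((y,v),\<gamma>1) \<in> bigAdj P L P' L' f" "(\<gamma>1,\<gamma>2) \<in> bigAdj P L P' L' f"
      "(\<gamma>2,(x,u)) \<in> bigAdj P L P' L' f" using c(3) by blast
    have n1: "((x,u),(y,v)) \<notin> bigAdj P L P' L' f" using c(1) adj_sym by blast
    have n2: "\<not> (\<exists>\<gamma>. ((x,u),\<gamma>) \<in> bigAdj P L P' L' f \<and> (\<gamma>,(y,v)) \<in> bigAdj P L P' L' f)"
      using c(2) adj_sym by blast
    show ?thesis using dist3[OF n1 n2 n0 adj_sym[OF g(3)] adj_sym[OF g(2)] adj_sym[OF g(1)]] .
  qed
qed

end
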